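(* Fix $0\le\zeta_1<\zeta_2\le1$. For $\zeta_1<\zeta<\zeta_2$ define $$q(\zeta)=\frac{D(\zeta_2\|\zeta)\,(\zeta-\zeta_1)^2}{D(\zeta_1\|\zeta)\,(\zeta_2-\zeta)^2}.$$ Then $q$ is non-decreasing on $(\zeta_1,\zeta_2)$.
   Context: $D(p\|q)=p\log\frac pq+(1-p)\log\frac{1-p}{1-q}$ is the binary Kullback–Leibler divergence (natural log, with $0\log0=0$), defined for $p\in[0,1]$, $q\in(0,1)$. *)

theory Defs
  imports Complex_Main
begin

definition xlogxy :: "real \<Rightarrow> real \<Rightarrow> real" where
  "xlogxy x y = (if x = 0 then 0 else x * ln (x / y))"

definition binKL :: "real \<Rightarrow> real \<Rightarrow> real" where
  "binKL p q = xlogxy p q + xlogxy (1 - p) (1 - q)"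

definition qfun :: "real \<Rightarrow> real \<Rightarrow> real \<Rightarrow> real" where
  "qfun z1 z2 z = (binKL z2 z * (z - z1)^2) / (binKL z1 z * (z2 - z)^2)"

end

theory Submission imports Defs "HOL-Real_Asymp.Real_Asymp" begin

lemma xlog_tends: fixes c :: real assumes "c > 0"
  shows "((\<lambda>x. xlogxy x c) \<longlongrightarrow> 0) (at_right 0)"
proof -
  have "((\<lambda>x::real. x * ln x - x * ln c) \<longlongrightarrow> 0) (at_right 0)"
    by real_asymp
  moreover have "eventually (\<lambda>x::real. x > 0) (at_right 0)" by (simp add: eventually_at_right_less)
  then have ev: "eventually (\<lambda>x. x * ln x - x * ln c = xlogxy x c) (at_right 0)"
    by eventually_elim (use assms in \<open>auto simp: xlogxy_def ln_div algebra_simps\<close>)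
  ultimately show ?thesis using tendsto_cong[OF ev] by simp
qed

lemma xlog_cont: fixes c :: real assumes "c > 0"
  shows "continuous_on {0..1} (\<lambda>x. xlogxy x c)"
proof -
  have "continuous (at x within {0..1}) (\<lambda>x. xlogxy x c)" if x: "x \<in> {0..1}" for x
  proof (cases "x = 0")
    case True
    then show ?thesis
      using xlog_tends[OF assms] by (simp add: continuous_within at_within_Icc_at_right xlogxy_def)
  next
    case False
    with x have xp: "x > 0" by auto
    have c1: "isCont (\<lambda>x. x * ln (x / c)) x" using xp assms by (intro continuous_intros) auto
    have "eventually (\<lambda>y. y \<in> {0<..}) (nhds x)" using xp by (intro eventually_nhds_in_open) auto
    then have ev: "eventually (\<lambda>y. y * ln (y / c) = xlogxy y c) (nhds x)"
      by eventually_elim (auto simp: xlogxy_def)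
    then have "isCont (\<lambda>x. xlogxy x c) x" using c1 isCont_cong[OF ev] by simp
    then show ?thesis using continuous_at_imp_continuous_at_within by blast
  qed
  then show ?thesis using continuous_on_eq_continuous_within by blast
qed

lemma amgm3: fixes x y w :: real assumes "x \<ge> 0" "y \<ge> 0" "w \<ge> 0"
  shows "27*x*y*w \<le> (x+y+w)^3"
proof -
  have e: "2*((x+y+w)^3 - 27*x*y*w) = (x+y+w)*((x-y)^2+(y-w)^2+(w-x)^2) + 6*(y*(x-w)^2 + x*(y-w)^2 + w*(x-y)^2)"
    by (simp add: power2_eq_square power3_eq_cube algebra_simps)
  have "0 \<le> (x+y+w)*((x-y)^2+(y-w)^2+(w-x)^2)" using assms by simp
  moreover have "0 \<le> 6*(y*(x-w)^2 + x*(y-w)^2 + w*(x-y)^2)" using assms by simp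
  ultimately have "0 \<le> 2*((x+y+w)^3 - 27*x*y*w)" unfolding e by linarith
  then show ?thesis by (simp add: ac_simps)
qed

lemma dg:
  fixes q p :: real assumes Lp: "2*q - q^2 + p*(1-2*q) \<noteq> 0"
  shows "DERIV (\<lambda>p. 3*(p-q)^2/(2*(2*q - q^2 + p*(1-2*q)))) p :> 3/2*(p-q)*(6*(q*(1-q)) + (1-2*q)*(p-q))/(2*q - q^2 + p*(1-2*q))^2"
proof -
  have d1: "DERIV (\<lambda>p. 3*(p-q)^2) p :> 6*(p-q)"
    by (auto intro!: derivative_eq_intros)
  have d2: "DERIV (\<lambda>p. 2*(2*q - q^2 + p*(1-2*q))) p :> 2*(1-2*q)"
    by (auto intro!: derivative_eq_intros)
  have "DERIV (\<lambda>p. 3*(p-q)^2/(2*(2*q - q^2 + p*(1-2*q)))) p :> 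
     (6*(p-q) * (2*(2*q - q^2 + p*(1-2*q))) - 3*(p-q)^2 * (2*(1-2*q))) / ((2*(2*q - q^2 + p*(1-2*q))) * (2*(2*q - q^2 + p*(1-2*q))))"
    by (rule DERIV_divide[OF d1 d2]) (use Lp in simp)
  moreover have "(6*(p-q) * (2*(2*q - q^2 + p*(1-2*q))) - 3*(p-q)^2 * (2*(1-2*q))) / ((2*(2*q - q^2 + p*(1-2*q))) * (2*(2*q - q^2 + p*(1-2*q))))
     = 3/2*(p-q)*(6*(q*(1-q)) + (1-2*q)*(p-q))/(2*q - q^2 + p*(1-2*q))^2"
    using Lp by (simp add: divide_simps) (simp add: power2_eq_square algebra_simps)
  ultimately show ?thesis by simp
qed

lemma alg: fixes L s b u :: real assumes h: "L = 3*s+b*u" and L: "L \<noteq> 0"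
  shows "(3/2*(6*s + 2*b*u) * L^2 - 3/2*u*(6*s + b*u) * (2*L*b)) / (L^2 * L^2) = 27*s^2/L^3"
proof -
  have e: "(6*s+2*b*u)*L - 2*b*u*(6*s+b*u) = 18*s^2" by (simp add: h algebra_simps power2_eq_square)
  have "3/2*(6*s + 2*b*u) * L^2 - 3/2*u*(6*s + b*u) * (2*L*b) = 3/2*L*((6*s+2*b*u)*L - 2*b*u*(6*s+b*u))"
    by (simp add: algebra_simps power2_eq_square)
  also have "\<dots> = 27*s^2*L" by (simp add: e)
  finally show ?thesis using L by (simp add: field_simps power2_eq_square power3_eq_cube)
qed

lemma dg1:
  fixes q p :: real assumes Lp: "2*q - q^2 + p*(1-2*q) \<noteq> 0"
  shows "DERIV (\<lambda>p. 3/2*(p-q)*(6*(q*(1-q)) + (1-2*q)*(p-q))/(2*q - q^2 + p*(1-2*q))^2) p :> 27*(q*(1-q))^2/(2*q - q^2 + p*(1-2*q))^3"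
proof -
  have d1: "DERIV (\<lambda>p. 3/2*(p-q)*(6*(q*(1-q)) + (1-2*q)*(p-q))) p :> 3/2*(6*(q*(1-q)) + 2*(1-2*q)*(p-q))"
    by (rule derivative_eq_intros refl)+ (simp add: field_simps)
  have d2: "DERIV (\<lambda>p. (2*q - q^2 + p*(1-2*q))^2) p :> 2*(2*q - q^2 + p*(1-2*q))*(1-2*q)"
    by (auto intro!: derivative_eq_intros)
  have "DERIV (\<lambda>p. 3/2*(p-q)*(6*(q*(1-q)) + (1-2*q)*(p-q))/(2*q - q^2 + p*(1-2*q))^2) p :> 
     (3/2*(6*(q*(1-q)) + 2*(1-2*q)*(p-q)) * (2*q - q^2 + p*(1-2*q))^2 - 3/2*(p-q)*(6*(q*(1-q)) + (1-2*q)*(p-q)) * (2*(2*q - q^2 + p*(1-2*q))*(1-2*q)))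
      / ((2*q - q^2 + p*(1-2*q))^2 * (2*q - q^2 + p*(1-2*q))^2)"
    by (rule DERIV_divide[OF d1 d2]) (use Lp in simp)
  moreover have "(3/2*(6*(q*(1-q)) + 2*(1-2*q)*(p-q)) * (2*q - q^2 + p*(1-2*q))^2 - 3/2*(p-q)*(6*(q*(1-q)) + (1-2*q)*(p-q)) * (2*(2*q - q^2 + p*(1-2*q))*(1-2*q)))
      / ((2*q - q^2 + p*(1-2*q))^2 * (2*q - q^2 + p*(1-2*q))^2) = 27*(q*(1-q))^2/(2*q - q^2 + p*(1-2*q))^3"
    by (rule alg[OF _ Lp]) (simp add: algebra_simps power2_eq_square)
  ultimately show ?thesis by simp
qed

lemma key:
  fixes p q :: real assumes q: "0 < q" "q < 1" and p: "0 \<le> p" "p \<le> 1"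
  shows "3*(p-q)^2 \<le> binKL p q * (2*(2*q - q^2 + p*(1-2*q)))"
proof -
  define L where "L = (\<lambda>p::real. 2*q - q^2 + p*(1-2*q))"
  have Lsplit: "L x = q*(1-q) + x*(1-q) + q*(1-x)" for x unfolding L_def by (simp add: algebra_simps power2_eq_square)
  have Lpos: "L x > 0" if "0 \<le> x" "x \<le> 1" for x
  proof -
    have "q*(1-q) > 0" using q by simp
    moreover have "x*(1-q) \<ge> 0" "q*(1-x) \<ge> 0" using q that by simp_all
    ultimately show ?thesis unfolding Lsplit by linarith
  qed
  define g where "g = (\<lambda>p. 3*(p-q)^2/(2*(2*q - q^2 + p*(1-2*q))))"
  define g1 where "g1 = (\<lambda>p. 3/2*(p-q)*(6*(q*(1-q)) + (1-2*q)*(p-q))/(2*q - q^2 + p*(1-2*q))^2)"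
  define h where "h = (\<lambda>p. ln (p/q) - ln ((1-p)/(1-q)) - g1 p)"
  define F where "F = (\<lambda>p. binKL p q - g p)"
  have Lne: "2*q - q^2 + x*(1-2*q) \<noteq> 0" if "0 \<le> x" "x \<le> 1" for x
    using Lpos[OF that] unfolding L_def by simp
  have dh: "DERIV h x :> 1/x + 1/(1-x) - 27*(q*(1-q))^2/(L x)^3" if x: "0 < x" "x < 1" for x
  proof -
    have a: "DERIV (\<lambda>p. ln (p/q)) x :> 1/x"
      using x q by (auto intro!: derivative_eq_intros simp: field_simps)
    have b: "DERIV (\<lambda>p. ln ((1-p)/(1-q))) x :> -1/(1-x)"
    proof -
      have "DERIV (\<lambda>p. ln (1-p) - ln (1-q)) x :> -1/(1-x)"
        using x by (auto intro!: derivative_eq_intros)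
      then show ?thesis
        by (rule has_field_derivative_transform_within_open[where S="{..<1}"]) (use x q in \<open>auto simp: ln_div\<close>)
    qed
    have c: "DERIV g1 x :> 27*(q*(1-q))^2/(L x)^3"
      unfolding g1_def L_def by (rule dg1) (use Lne x in auto)
    show ?thesis unfolding h_def using DERIV_diff[OF DERIV_diff[OF a b] c] by simp
  qed
  have dhnn: "1/x + 1/(1-x) - 27*(q*(1-q))^2/(L x)^3 \<ge> 0" if x: "0 < x" "x < 1" for x
  proof -
    have "27*(q*(1-q))*(x*(1-q))*(q*(1-x)) \<le> (L x)^3"
      unfolding Lsplit by (rule amgm3) (use q x in auto)
    then have "27*(q*(1-q))^2 * (x*(1-x)) \<le> (L x)^3" by (simp add: power2_eq_square ac_simps)
    moreover have "L x > 0" using Lpos x by simp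
    ultimately have "27*(q*(1-q))^2/(L x)^3 \<le> 1/(x*(1-x))" using x
      by (simp add: divide_simps ac_simps)
    moreover have "1/(x*(1-x)) = 1/x + 1/(1-x)" using x by (simp add: field_simps)
    ultimately show ?thesis by simp
  qed
  have dh': "\<exists>y. DERIV h x :> y \<and> y \<ge> 0" if "0 < x" "x < 1" for x
    using dh[OF that] dhnn[OF that] by blast
  have hq: "h q = 0" unfolding h_def g1_def using q by simp
  have hcont: "continuous_on {a..b} h" if "0 < a" "b < 1" for a b
  proof (intro continuous_at_imp_continuous_on ballI)
    fix x assume "x \<in> {a..b}"
    then have "0 < x" "x < 1" using that by auto
    then show "isCont h x" using dh DERIV_isCont by blast
  qed
  have hpos: "h x \<ge> 0" if "q \<le> x" "x < 1" for x
  proof -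
    have "h q \<le> h x"
    proof (rule DERIV_nonneg_imp_increasing_open[OF that(1)])
      fix y assume "q < y" "y < x" then show "\<exists>z. DERIV h y :> z \<and> z \<ge> 0" using dh' q that by simp
    qed (rule hcont, use q that in auto)
    then show ?thesis using hq by simp
  qed
  have hneg: "h x \<le> 0" if "0 < x" "x \<le> q" for x
  proof -
    have "h x \<le> h q"
    proof (rule DERIV_nonneg_imp_increasing_open[OF that(2)])
      fix y assume "x < y" "y < q" then show "\<exists>z. DERIV h y :> z \<and> z \<ge> 0" using dh' q that by simp
    qed (rule hcont, use q that in auto)
    then show ?thesis using hq by simp
  qed
  have dF: "DERIV F x :> h x" if x: "0 < x" "x < 1" for x
  proof -
    have a: "DERIV (\<lambda>p. p * ln (p/q) + (1-p) * ln ((1-p)/(1-q)) - g p) x :> 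
      (ln (x/q) + 1) + (- ln ((1-x)/(1-q)) - 1) - g1 x"
    proof -
      have a1: "DERIV (\<lambda>p. p * ln (p/q)) x :> ln (x/q) + 1"
        using x q by (auto intro!: derivative_eq_intros simp: field_simps)
      have a2: "DERIV (\<lambda>p. (1-p) * ln ((1-p)/(1-q))) x :> - ln ((1-x)/(1-q)) - 1"
      proof -
        have "DERIV (\<lambda>p. (1-p) * (ln (1-p) - ln (1-q))) x :> - (ln (1-x) - ln (1-q)) + (1-x) * (-1/(1-x))"
          using x by (auto intro!: derivative_eq_intros)
        moreover have "- (ln (1-x) - ln (1-q)) + (1-x) * (-1/(1-x)) = - ln ((1-x)/(1-q)) - 1"
          using x q by (simp add: ln_div)
        ultimately have "DERIV (\<lambda>p. (1-p) * (ln (1-p) - ln (1-q))) x :> - ln ((1-x)/(1-q)) - 1" by simp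
        then show ?thesis
          by (rule has_field_derivative_transform_within_open[where S="{..<1}"]) (use x q in \<open>auto simp: ln_div\<close>)
      qed
      have a3: "DERIV g x :> g1 x" unfolding g_def g1_def by (rule dg) (use Lne x in auto)
      show ?thesis using DERIV_diff[OF DERIV_add[OF a1 a2] a3] by simp
    qed
    show ?thesis
    proof (rule has_field_derivative_transform_within_open[OF _ _ _])
      show "DERIV (\<lambda>p. p * ln (p/q) + (1-p) * ln ((1-p)/(1-q)) - g p) x :> h x"
        using a unfolding h_def by simp
      show "open {0<..<(1::real)}" by simp
      show "x \<in> {0<..<1}" using x by simp
    qed (auto simp: F_def binKL_def xlogxy_def)
  qed
  have Fcont: "continuous_on {0..1} F"
  proof -
    have c1: "continuous_on {0..1} (\<lambda>p. xlogxy p q)" by (rule xlog_cont) (use q in simp)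
    have c2: "continuous_on {0..1} (\<lambda>p. xlogxy (1-p) (1-q))"
      by (rule continuous_on_compose2[OF xlog_cont[of "1-q"]]) (use q in \<open>auto intro!: continuous_intros\<close>)
    have c3: "continuous_on {0..1} g" unfolding g_def
    proof (intro continuous_intros ballI)
      fix x :: real assume "x \<in> {0..1}"
      then have "2*q - q^2 + x*(1-2*q) \<noteq> 0" using Lne by auto
      then show "2*(2*q - q^2 + x*(1-2*q)) \<noteq> 0" by (simp only: mult_eq_0_iff) simp
    qed
    show ?thesis unfolding F_def binKL_def using c1 c2 c3 by (intro continuous_intros)
  qed
  have Fq: "F q = 0" unfolding F_def binKL_def xlogxy_def g_def using q by simp
  have "F p \<ge> 0"
  proof (cases "q \<le> p")
    case True
    have "F q \<le> F p"
    proof (rule DERIV_nonneg_imp_increasing_open[OF True])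
      fix y assume "q < y" "y < p" then show "\<exists>z. DERIV F y :> z \<and> z \<ge> 0" using dF hpos q p by force
    qed (rule continuous_on_subset[OF Fcont], use q p in auto)
    then show ?thesis using Fq by simp
  next
    case False
    have "F q \<le> F p"
    proof (rule DERIV_nonpos_imp_decreasing_open[of p q])
      fix y assume a: "p < y" "y < q"
      then have y: "0 < y" "y < 1" "y \<le> q" using p q by auto
      show "\<exists>z. DERIV F y :> z \<and> z \<le> 0" using dF[OF y(1,2)] hneg[OF y(1,3)] by blast
    qed (use False in simp, rule continuous_on_subset[OF Fcont], use q p in auto)
    then show ?thesis using Fq by simp
  qed
  then have "g p \<le> binKL p q" unfolding F_def by simp
  moreover have "2*(2*q - q^2 + p*(1-2*q)) > 0" using Lpos[OF p] unfolding L_def by simp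
  ultimately show ?thesis unfolding g_def by (simp add: divide_simps)
qed

lemma dxl1: fixes c z :: real assumes c: "c \<ge> 0" and z: "z > 0"
  shows "DERIV (\<lambda>z. xlogxy c z) z :> - c / z"
proof (cases "c = 0")
  case True then show ?thesis by (simp add: xlogxy_def)
next
  case False
  then have cp: "c > 0" using c by simp
  have "DERIV (\<lambda>z. c * (ln c - ln z)) z :> c * (0 - 1/z)"
    using z by (auto intro!: derivative_eq_intros)
  then have "DERIV (\<lambda>z. c * (ln c - ln z)) z :> - c / z" by simp
  then show ?thesis
    by (rule has_field_derivative_transform_within_open[where S="{0<..}"]) (use z cp in \<open>auto simp: xlogxy_def ln_div\<close>)
qed

lemma dxl2: fixes c z :: real assumes c: "c \<ge> 0" and z: "z < 1"
  shows "DERIV (\<lambda>z. xlogxy c (1-z)) z :> c / (1-z)"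
proof (cases "c = 0")
  case True then show ?thesis by (simp add: xlogxy_def)
next
  case False
  then have cp: "c > 0" using c by simp
  have "DERIV (\<lambda>z. c * (ln c - ln (1-z))) z :> c * (0 - (-1)/(1-z))"
    using z by (auto intro!: derivative_eq_intros)
  then have "DERIV (\<lambda>z. c * (ln c - ln (1-z))) z :> c / (1-z)" by simp
  then show ?thesis
    by (rule has_field_derivative_transform_within_open[where S="{..<1}"]) (use z cp in \<open>auto simp: xlogxy_def ln_div\<close>)
qed

lemma dD: fixes p z :: real assumes p: "0 \<le> p" "p \<le> 1" and z: "0 < z" "z < 1"
  shows "DERIV (\<lambda>z. binKL p z) z :> (z - p)/(z*(1-z))"
proof -
  have "DERIV (\<lambda>z. binKL p z) z :> - p / z + (1-p)/(1-z)"
    unfolding binKL_def by (intro DERIV_add dxl1 dxl2) (use p z in auto)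
  moreover have "- p / z + (1-p)/(1-z) = (z - p)/(z*(1-z))" using z by (simp add: field_simps)
  ultimately show ?thesis by simp
qed

lemma Dpos: fixes p q :: real assumes q: "0 < q" "q < 1" and p: "0 \<le> p" "p \<le> 1" "p \<noteq> q"
  shows "binKL p q > 0"
proof -
  have X: "2*(2*q - q^2 + p*(1-2*q)) = 2*(q*(1-q) + p*(1-q) + q*(1-p))" by (simp add: algebra_simps power2_eq_square)
  have A: "q*(1-q) > 0" using q by simp
  have B: "p*(1-q) \<ge> 0" "q*(1-p) \<ge> 0" using q p by simp_all
  have "0 < q*(1-q) + p*(1-q) + q*(1-p)" using add_pos_nonneg[OF add_pos_nonneg[OF A B(1)] B(2)] .
  then have Xp: "2*(2*q - q^2 + p*(1-2*q)) > 0" unfolding X by simp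
  have "3*(p-q)^2 > 0" using p by simp
  then have "0 < binKL p q * (2*(2*q - q^2 + p*(1-2*q)))" using key[OF q p(1,2)] by linarith
  then show ?thesis using Xp by (simp add: zero_less_mult_iff)
qed

lemma num: fixes a b s c D1 D2 :: real
  assumes a: "a > 0" and b: "b > 0" and s: "s > 0" and D: "D1 \<ge> 0" "D2 \<ge> 0"
    and K2: "3*a^2 \<le> D2*(6*s + 2*c*a)" and K1: "3*b^2 \<le> D1*(6*s - 2*c*b)"
  shows "0 \<le> ((-a/s)*b^2 + D2*(2*b))*(D1*a^2) - (D2*b^2)*((b/s)*a^2 + D1*(2*a)*(-1))"
proof -
  have e: "((-a/s)*b^2 + D2*(2*b))*(D1*a^2) - (D2*b^2)*((b/s)*a^2 + D1*(2*a)*(-1))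
     = (a*b/s)*(2*s*(a+b)*D1*D2 - a*b*(a*D1+b*D2))"
    using s by (simp add: field_simps power2_eq_square)
  have "b*D1*(3*a^2) \<le> b*D1*(D2*(6*s + 2*c*a))" using K2 b D by (intro mult_left_mono) auto
  moreover have "a*D2*(3*b^2) \<le> a*D2*(D1*(6*s - 2*c*b))" using K1 a D by (intro mult_left_mono) auto
  ultimately have m: "b*D1*(3*a^2) + a*D2*(3*b^2) \<le> b*D1*(D2*(6*s + 2*c*a)) + a*D2*(D1*(6*s - 2*c*b))"
    by (rule add_mono)
  have "3*(a*b*(a*D1+b*D2)) = b*D1*(3*a^2) + a*D2*(3*b^2)" by (simp add: algebra_simps power2_eq_square)
  also have "\<dots> \<le> b*D1*(D2*(6*s + 2*c*a)) + a*D2*(D1*(6*s - 2*c*b))" by (rule m)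
  also have "\<dots> = 3*(2*s*(a+b)*D1*D2)" by (simp add: algebra_simps)
  finally have "3*(a*b*(a*D1+b*D2)) \<le> 3*(2*s*(a+b)*D1*D2)" .
  then have "a*b*(a*D1+b*D2) \<le> 2*s*(a+b)*D1*D2" by (rule mult_left_le_imp_le) simp
  then have "0 \<le> 2*s*(a+b)*D1*D2 - a*b*(a*D1+b*D2)" by simp
  moreover have "0 \<le> a*b/s" using a b s by simp
  ultimately show ?thesis unfolding e by (rule mult_nonneg_nonneg[OF _ _, rotated])
qed


theorem lemma16:
  fixes z1 z2 :: real
  assumes "0 \<le> z1" and "z1 < z2" and "z2 \<le> 1"
  shows "mono_on {z1<..<z2} (qfun z1 z2)"
proof -
  have dq: "\<exists>y. DERIV (qfun z1 z2) z :> y \<and> y \<ge> 0" if z: "z1 < z" "z < z2" for z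
  proof -
    have z01: "0 < z" "z < 1" using z assms by auto
    define a where "a = z2 - z"
    define b where "b = z - z1"
    define s where "s = z*(1-z)"
    define D1 where "D1 = binKL z1 z"
    define D2 where "D2 = binKL z2 z"
    have ap: "a > 0" "b > 0" "s > 0" using z z01 by (auto simp: a_def b_def s_def)
    have D1p: "D1 > 0" unfolding D1_def by (rule Dpos) (use z01 z assms in auto)
    have D2p: "D2 > 0" unfolding D2_def by (rule Dpos) (use z01 z assms in auto)
    have dA: "DERIV (\<lambda>z. binKL z2 z * (z-z1)^2) z :> (z - z2)/(z*(1-z)) * (z-z1)^2 + binKL z2 z * (2*(z-z1))"
      by (rule DERIV_mult[OF dD, THEN DERIV_cong]) (use z01 assms z in \<open>auto intro!: derivative_eq_intros\<close>)
    have dB: "DERIV (\<lambda>z. binKL z1 z * (z2-z)^2) z :> (z - z1)/(z*(1-z)) * (z2-z)^2 + binKL z1 z * (2*(z2-z)*(-1))"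
      by (rule DERIV_mult[OF dD, THEN DERIV_cong]) (use z01 assms z in \<open>auto intro!: derivative_eq_intros\<close>)
    have Bnz: "binKL z1 z * (z2-z)^2 \<noteq> 0" using D1p ap unfolding D1_def a_def by simp
    have qeq: "qfun z1 z2 = (\<lambda>z. binKL z2 z * (z-z1)^2 / (binKL z1 z * (z2-z)^2))"
      by (simp add: fun_eq_iff qfun_def)
    have dQ: "DERIV (qfun z1 z2) z :> 
      (((z - z2)/(z*(1-z)) * (z-z1)^2 + binKL z2 z * (2*(z-z1))) * (binKL z1 z * (z2-z)^2)
       - (binKL z2 z * (z-z1)^2) * ((z - z1)/(z*(1-z)) * (z2-z)^2 + binKL z1 z * (2*(z2-z)*(-1))))
      / ((binKL z1 z * (z2-z)^2) * (binKL z1 z * (z2-z)^2))"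
      unfolding qeq by (rule DERIV_divide[OF dA dB Bnz])
    have e1: "z - z2 = -a" "z - z1 = b" "z2 - z = a" "z*(1-z) = s"
      by (auto simp: a_def b_def s_def)
    have K2: "3*a^2 \<le> D2*(6*s + 2*(1-2*z)*a)"
    proof -
      have "3*(z2-z)^2 \<le> binKL z2 z * (2*(2*z - z^2 + z2*(1-2*z)))"
        by (rule key) (use z01 z assms in auto)
      moreover have "2*(2*z - z^2 + z2*(1-2*z)) = 6*s + 2*(1-2*z)*a"
        by (simp add: a_def s_def algebra_simps power2_eq_square)
      ultimately show ?thesis by (simp add: e1 D2_def)
    qed
    have K1: "3*b^2 \<le> D1*(6*s - 2*(1-2*z)*b)"
    proof -
      have "3*(z1-z)^2 \<le> binKL z1 z * (2*(2*z - z^2 + z1*(1-2*z)))"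
        by (rule key) (use z01 z assms in auto)
      moreover have "2*(2*z - z^2 + z1*(1-2*z)) = 6*s - 2*(1-2*z)*b"
        by (simp add: b_def s_def algebra_simps power2_eq_square)
      moreover have "(z1-z)^2 = b^2" by (simp add: b_def power2_commute)
      ultimately show ?thesis by (simp add: D1_def)
    qed
    have N: "0 \<le> ((-a/s)*b^2 + D2*(2*b))*(D1*a^2) - (D2*b^2)*((b/s)*a^2 + D1*(2*a)*(-1))"
      by (rule num[OF ap _ _ K2 K1]) (use D1p D2p in auto)
    have "0 \<le> (((z - z2)/(z*(1-z)) * (z-z1)^2 + binKL z2 z * (2*(z-z1))) * (binKL z1 z * (z2-z)^2)
       - (binKL z2 z * (z-z1)^2) * ((z - z1)/(z*(1-z)) * (z2-z)^2 + binKL z1 z * (2*(z2-z)*(-1))))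
      / ((binKL z1 z * (z2-z)^2) * (binKL z1 z * (z2-z)^2))"
      unfolding e1 D1_def[symmetric] D2_def[symmetric] using N by simp
    then show ?thesis using dQ by blast
  qed
  show ?thesis
  proof (rule mono_onI)
    fix r t assume r: "r \<in> {z1<..<z2}" and t: "t \<in> {z1<..<z2}" and rt: "r \<le> t"
    show "qfun z1 z2 r \<le> qfun z1 z2 t"
    proof (rule DERIV_nonneg_imp_increasing_open[OF rt])
      fix y assume "r < y" "y < t"
      then show "\<exists>z. DERIV (qfun z1 z2) y :> z \<and> z \<ge> 0" using dq r t by simp
    next
      show "continuous_on {r..t} (qfun z1 z2)"
      proof (intro continuous_at_imp_continuous_on ballI)
        fix x assume "x \<in> {r..t}"
        then have "z1 < x" "x < z2" using r t by auto
        then show "isCont (qfun z1 z2) x" using dq DERIV_isCont by blast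
      qed
    qed
  qed
qed
end
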